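(* For every agent $i$ and every measurable $q_i:[0,1]\to[0,1]$, letting $r_i=\int_0^1q_i(x)\,dx$ and $H_i(t)=F_{i,0}(2\kappa t)$, \[ \int_0^1 q_i(x)\,F_{i,x}^{-1}(1-q_i(x))\,dx\ \le\ r_i\,F_{i,0}^{-1}(1-r_i)\ =\ 2\kappa\, r_i\,H_i^{-1}(1-r_i). \]
   Context: Agent $i$ has a valuation $v_i:[0,1]\to\mathbb{R}_{\ge0}$ drawn from a distribution $\mathcal F_i$; almost surely $v_i$ is non-decreasing, concave and differentiable on $[0,1]$ (one-sided derivatives at endpoints); $\kappa\ge1$ is a fixed constant. For $x\in[0,1]$, $F_{i,x}$ is the cdf of $v_i'(x)$ for $v_i\sim\mathcal F_i$, and $F^{-1}(s)=\inf\{t:F(t)\ge s\}$ denotes the quantile function of a cdf $F$ (convention $0\cdot F^{-1}(1)=0$). Regularity assumption: $q\mapsto q\,F_{i,0}^{-1}(1-q)$ is concave on $[0,1]$. *)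

theory Defs
  imports "HOL-Analysis.Analysis" "HOL-Probability.Probability"
begin

text \<open>Since the random variables here are nonnegative,
  F t = 0 for t < 0, so restricting to t >= 0 changes nothing for s > 0 and
  fixes F^{-1}(0) = 0 (instead of -infinity).\<close>
definition quantile :: "(real \<Rightarrow> real) \<Rightarrow> real \<Rightarrow> real" where
  "quantile F s = Inf {t. 0 \<le> t \<and> s \<le> F t}"

definition qtimes :: "real \<Rightarrow> (real \<Rightarrow> real) \<Rightarrow> real" where
  "qtimes q F = (if q = 0 then 0 else q * quantile F (1 - q))"

definition deriv_cdf :: "'a measure \<Rightarrow> ('a \<Rightarrow> real \<Rightarrow> real) \<Rightarrow> real \<Rightarrow> real \<Rightarrow> real" where
  "deriv_cdf M D x t = measure M {\<omega> \<in> space M. D \<omega> x \<le> t}"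

end

theory Submission
  imports Defs
begin

lemma concave_tangent01:
  fixes f :: "real \<Rightarrow> real"
  assumes cv: "concave_on {0..1} f" and c: "c \<in> {0..1}" and x: "x \<in> {0..1}"
    and d: "(f has_real_derivative D) (at c within {0..1})"
  shows "f x - f c \<le> D * (x - c)"
proof (cases x c rule: linorder_cases)
  case greater
  have sub: "{c..x} \<subseteq> {0..1}" using c x by auto
  have cv': "concave_on {c..x} f" using cv sub unfolding concave_on_def by (meson convex_on_subset convex_real_interval(5))
  have "((\<lambda>y. (f y - f c) / (y - c)) \<longlongrightarrow> D) (at c within {0..1})"
    using d by (simp add: has_field_derivative_iff)
  hence "((\<lambda>y. (f y - f c) / (y - c)) \<longlongrightarrow> D) (at c within {c..x})"
    by (rule tendsto_mono[OF at_le[OF sub]])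
  hence lim: "((\<lambda>y. (f y - f c) / (y - c)) \<longlongrightarrow> D) (at_right c)"
    using greater by (simp add: at_within_Icc_at_right)
  have ev: "eventually (\<lambda>y. (f x - f c) / (x - c) \<le> (f y - f c) / (y - c)) (at_right c)"
    using eventually_at_right_real[OF greater]
  proof eventually_elim
    fix y assume y: "y \<in> {c<..<x}"
    have "f y \<ge> (f x - f c) / (x - c) * (y - c) + f c"
      using concave_onD_Icc'[OF cv', of y] y by auto
    thus "(f x - f c) / (x - c) \<le> (f y - f c) / (y - c)" using y by (simp add: field_simps)
  qed
  have "(f x - f c) / (x - c) \<le> D"
    by (rule tendsto_lowerbound[OF lim ev]) simp
  thus ?thesis using greater by (simp add: field_simps)
next
  case less
  have sub: "{x..c} \<subseteq> {0..1}" using c x by auto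
  have cv': "concave_on {x..c} f" using cv sub unfolding concave_on_def by (meson convex_on_subset convex_real_interval(5))
  have "((\<lambda>y. (f y - f c) / (y - c)) \<longlongrightarrow> D) (at c within {0..1})"
    using d by (simp add: has_field_derivative_iff)
  hence "((\<lambda>y. (f y - f c) / (y - c)) \<longlongrightarrow> D) (at c within {x..c})"
    by (rule tendsto_mono[OF at_le[OF sub]])
  hence lim: "((\<lambda>y. (f y - f c) / (y - c)) \<longlongrightarrow> D) (at_left c)"
    using less by (simp add: at_within_Icc_at_left)
  have ev: "eventually (\<lambda>y. (f y - f c) / (y - c) \<le> (f x - f c) / (x - c)) (at_left c)"
    using eventually_at_left_real[OF less]
  proof eventually_elim
    fix y assume y: "y \<in> {x<..<c}"
    have "f y \<ge> (f x - f c) / (c - x) * (c - y) + f c"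
      using concave_onD_Icc''[OF cv', of y] y by auto
    thus "(f y - f c) / (y - c) \<le> (f x - f c) / (x - c)" using y by (simp add: field_simps)
  qed
  have "D \<le> (f x - f c) / (x - c)"
    by (rule tendsto_upperbound[OF lim ev]) simp
  thus ?thesis using less by (simp add: field_simps)
qed simp

lemma concave_deriv_le0:
  fixes f :: "real \<Rightarrow> real"
  assumes cv: "concave_on {0..1} f" and x: "x \<in> {0..1}"
    and d: "\<forall>y\<in>{0..1}. (f has_real_derivative f' y) (at y within {0..1})"
  shows "f' x \<le> f' 0"
proof (cases "x = 0")
  case False
  hence xp: "x > 0" using x by auto
  have 1: "f x - f 0 \<le> f' 0 * (x - 0)"
    by (rule concave_tangent01[OF cv _ x]) (use d in auto)
  have 2: "f 0 - f x \<le> f' x * (0 - x)"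
    by (rule concave_tangent01[OF cv x]) (use d x in auto)
  from 1 2 have "f' x * x \<le> f' 0 * x" by simp
  thus ?thesis using xp by simp
qed simp

lemma concave_slopes01:
  fixes g :: "real \<Rightarrow> real"
  assumes cv: "concave_on {0..1} g" and y: "0 \<le> y" and yr: "y < r" and rz: "r < z" and z: "z \<le> 1"
  shows "(g z - g r) / (z - r) \<le> (g r - g y) / (r - y)"
proof -
  have h: "convex_on {0..1} (\<lambda>x. - g x)" using cv by (simp add: concave_on_def)
  have a: "((- g y) - (- g r)) / (y - r) \<le> ((- g y) - (- g z)) / (y - z)"
    and b: "((- g y) - (- g z)) / (y - z) \<le> ((- g r) - (- g z)) / (r - z)"
    using convex_on_slope_le[OF h, of y z r] y yr rz z by auto
  have "((- g y) - (- g r)) / (y - r) = - ((g r - g y) / (r - y))"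
    using yr by (simp add: field_simps)
  moreover have "((- g r) - (- g z)) / (r - z) = - ((g z - g r) / (z - r))"
    using rz by (simp add: field_simps)
  ultimately show ?thesis using a b by linarith
qed

lemma concave_support01:
  fixes g :: "real \<Rightarrow> real"
  assumes cv: "concave_on {0..1} g" and r: "0 < r" "r < 1"
  shows "\<exists>c. \<forall>y\<in>{0..1}. g y \<le> g r + c * (y - r)"
proof -
  define S where "S = (\<lambda>z. (g z - g r) / (z - r)) ` {r<..1}"
  have ne: "S \<noteq> {}" using r unfolding S_def by auto
  have bdd: "bdd_above S"
    unfolding S_def using concave_slopes01[OF cv order_refl r(1)]
    by (intro bdd_aboveI[of _ "(g r - g 0) / (r - 0)"]) auto
  define c where "c = Sup S"
  show ?thesis
  proof (intro exI ballI)
    fix y :: real assume y: "y \<in> {0..1}"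
    consider "y < r" | "y = r" | "y > r" by linarith
    then show "g y \<le> g r + c * (y - r)"
    proof cases
      case 1
      have "c \<le> (g r - g y) / (r - y)"
        unfolding c_def using ne
        by (rule cSup_least) (use concave_slopes01[OF cv _ 1] y in \<open>auto simp: S_def\<close>)
      thus ?thesis using 1 by (simp add: field_simps)
    next
      case 3
      have "(g y - g r) / (y - r) \<le> c"
        unfolding c_def by (rule cSup_upper[OF _ bdd]) (use 3 y in \<open>auto simp: S_def\<close>)
      thus ?thesis using 3 by (simp add: field_simps)
    qed simp
  qed
qed

lemma cdf_reaches:
  fixes D :: "'a \<Rightarrow> real"
  assumes P: "prob_space M" and Dm: "D \<in> borel_measurable M" and s: "s < 1"
  shows "\<exists>t\<ge>0. s \<le> measure M {\<omega>\<in>space M. D \<omega> \<le> t}"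
proof -
  interpret prob_space M by (rule P)
  define A where "A n = {\<omega>\<in>space M. D \<omega> \<le> real n}" for n :: nat
  have As: "range A \<subseteq> sets M" unfolding A_def using Dm by auto
  have inc: "incseq A" unfolding A_def incseq_def by auto
  have U: "(\<Union>n. A n) = space M"
  proof
    show "(\<Union>n. A n) \<subseteq> space M" unfolding A_def by auto
    show "space M \<subseteq> (\<Union>n. A n)"
    proof
      fix \<omega> assume "\<omega> \<in> space M"
      moreover have "D \<omega> \<le> real (nat \<lceil>D \<omega>\<rceil>)" by (simp add: real_nat_ceiling_ge)
      ultimately show "\<omega> \<in> (\<Union>n. A n)" unfolding A_def by auto
    qed
  qed
  have lim: "(\<lambda>n. measure M (A n)) \<longlonglongrightarrow> 1"
    using finite_Lim_measure_incseq[OF As inc] U prob_space by simp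
  from order_tendstoD(1)[OF lim s] obtain n where "s < measure M (A n)"
    by (auto simp: eventually_sequentially)
  thus ?thesis unfolding A_def by (intro exI[of _ "real n"]) auto
qed

lemma quantile_nonneg:
  assumes "\<exists>t\<ge>0. s \<le> F t"
  shows "0 \<le> quantile F s"
  unfolding quantile_def using assms by (intro cInf_greatest) auto

lemma quantile_mono_cdf:
  assumes "\<exists>t\<ge>0. s \<le> F t" and "\<And>t. F t \<le> G t"
  shows "quantile G s \<le> quantile F s"
  unfolding quantile_def
  by (rule cInf_superset_mono) (use assms order_trans in \<open>auto intro: bdd_belowI[of _ 0]\<close>)

lemma quantile_scale:
  assumes ne: "\<exists>t\<ge>0. s \<le> F t" and k: "k > 0"
  shows "quantile F s = k * quantile (\<lambda>t. F (k * t)) s"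
proof -
  let ?A = "{t. 0 \<le> t \<and> s \<le> F t}" and ?B = "{t. 0 \<le> t \<and> s \<le> F (k * t)}"
  have neA: "?A \<noteq> {}" using ne by auto
  obtain t0 where t0: "t0 \<ge> 0" "s \<le> F t0" using ne by auto
  have "t0 / k \<in> ?B" using t0 k by auto
  hence neB: "?B \<noteq> {}" by blast
  have bA: "bdd_below ?A" by (intro bdd_belowI[of _ 0]) auto
  have bB: "bdd_below ?B" by (intro bdd_belowI[of _ 0]) auto
  have 1: "Inf ?A \<le> k * Inf ?B"
  proof -
    have "Inf ?A / k \<le> Inf ?B"
    proof (rule cInf_greatest[OF neB])
      fix t assume "t \<in> ?B"
      hence "k * t \<in> ?A" using k by auto
      hence "Inf ?A \<le> k * t" by (rule cInf_lower[OF _ bA])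
      thus "Inf ?A / k \<le> t" using k by (simp add: field_simps)
    qed
    thus ?thesis using k by (simp add: field_simps)
  qed
  have 2: "k * Inf ?B \<le> Inf ?A"
  proof (rule cInf_greatest[OF neA])
    fix u assume u: "u \<in> ?A"
    hence "u / k \<in> ?B" using k by auto
    hence "Inf ?B \<le> u / k" by (rule cInf_lower[OF _ bB])
    thus "k * Inf ?B \<le> u" using k by (simp add: field_simps)
  qed
  show ?thesis unfolding quantile_def using 1 2 by linarith
qed

theorem mainTheorem11:
  fixes M :: "'a measure" and V V' :: "'a \<Rightarrow> real \<Rightarrow> real"
    and \<kappa> :: real and q :: "real \<Rightarrow> real"
  assumes kappa: "\<kappa> \<ge> 1"
    and prob: "prob_space M"
    and valuations: "AE \<omega> in M.
          (\<forall>x\<in>{0..1}. 0 \<le> V \<omega> x) \<and> mono_on {0..1} (V \<omega>) \<and> concave_on {0..1} (V \<omega>) \<and>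
          (\<forall>x\<in>{0..1}. (V \<omega> has_real_derivative V' \<omega> x) (at x within {0..1}))"
    and deriv_rv: "\<forall>x\<in>{0..1}. (\<lambda>\<omega>. V' \<omega> x) \<in> borel_measurable M"
    and regular: "concave_on {0..1} (\<lambda>s. qtimes s (deriv_cdf M V' 0))"
    and q_meas: "q \<in> borel_measurable (restrict_space lebesgue {0..1})"
    and q_range: "\<forall>x\<in>{0..1}. 0 \<le> q x \<and> q x \<le> 1"
  shows "let r = (LINT x:{0..1}|lebesgue. q x);
             H = (\<lambda>t. deriv_cdf M V' 0 (2 * \<kappa> * t))
         in (\<integral>\<^sup>+ x \<in> {0..1}. ennreal (qtimes (q x) (deriv_cdf M V' x)) \<partial>lebesgue)
              \<le> ennreal (qtimes r (deriv_cdf M V' 0))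
            \<and> qtimes r (deriv_cdf M V' 0) = 2 * \<kappa> * qtimes r H"
proof -
  interpret PM: prob_space M by (rule prob)
  define F where "F x = deriv_cdf M V' x" for x
  define g where "g y = qtimes y (F 0)" for y
  define N where "N = restrict_space lebesgue {0..1::real}"
  define r where "r = (LINT x:{0..1}|lebesgue. q x)"
  have spN: "space N = {0..1}" unfolding N_def by (simp add: space_restrict_space)
  have PN: "prob_space N"
    by (rule prob_spaceI) (simp add: N_def space_restrict_space emeasure_restrict_space)
  interpret PN: prob_space N by (rule PN)
  have qN: "q \<in> borel_measurable N" using q_meas by (simp add: N_def)
  have qint: "integrable N q"
    by (rule PN.integrable_const_bound[where B=1]) (use q_range spN qN in auto)
  have r_eq: "r = integral\<^sup>L N q"
    unfolding r_def N_def set_lebesgue_integral_def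
    by (subst integral_restrict_space) auto
  have r0: "0 \<le> r" unfolding r_eq using q_range spN by (intro integral_nonneg_AE) auto
  have r1: "r \<le> 1"
  proof -
    have "integral\<^sup>L N q \<le> integral\<^sup>L N (\<lambda>x. 1)"
      by (rule integral_mono[OF qint]) (use q_range spN in auto)
    thus ?thesis unfolding r_eq by (simp add: PN.prob_space)
  qed
  have NE: "\<exists>t\<ge>0. s \<le> F x t" if "x \<in> {0..1}" "s < 1" for x s
    unfolding F_def deriv_cdf_def using cdf_reaches[OF prob _ that(2)] deriv_rv that(1) by auto
  have Fmono: "F 0 t \<le> F x t" if x: "x \<in> {0..1}" for x t
  proof -
    have "AE \<omega> in M. V' \<omega> x \<le> V' \<omega> 0"
      using valuations by eventually_elim (use concave_deriv_le0 x in blast)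
    hence "AE \<omega> in M. \<omega> \<in> {\<omega>\<in>space M. V' \<omega> 0 \<le> t} \<longrightarrow> \<omega> \<in> {\<omega>\<in>space M. V' \<omega> x \<le> t}"
      by eventually_elim auto
    moreover have "{\<omega>\<in>space M. V' \<omega> x \<le> t} \<in> sets M"
    proof -
      have [measurable]: "(\<lambda>\<omega>. V' \<omega> x) \<in> borel_measurable M" using deriv_rv x by auto
      show ?thesis by measurable
    qed
    ultimately show ?thesis unfolding F_def deriv_cdf_def by (rule PM.finite_measure_mono_AE)
  qed
  have K: "qtimes y (F x) \<le> g y" if x: "x \<in> {0..1}" and y: "y \<in> {0..1}" for x y
  proof (cases "y = 0")
    case False
    hence "1 - y < 1" using y by auto
    hence "quantile (F x) (1 - y) \<le> quantile (F 0) (1 - y)"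
      using NE[of 0] Fmono[OF x] by (intro quantile_mono_cdf) auto
    thus ?thesis using False y unfolding g_def qtimes_def by (auto intro: mult_left_mono)
  qed (simp add: g_def qtimes_def)
  have gnn: "0 \<le> g y" if y: "y \<in> {0..1}" for y
  proof (cases "y = 0")
    case False
    hence "1 - y < 1" using y by auto
    hence "0 \<le> quantile (F 0) (1 - y)" using NE[of 0] by (intro quantile_nonneg) auto
    thus ?thesis using False y unfolding g_def qtimes_def by auto
  qed (simp add: g_def qtimes_def)
  have gcv: "concave_on {0..1} g" using regular unfolding g_def F_def by simp
  have LHS: "(\<integral>\<^sup>+ x \<in> {0..1}. ennreal (qtimes (q x) (F x)) \<partial>lebesgue)
        = (\<integral>\<^sup>+ x. ennreal (qtimes (q x) (F x)) \<partial>N)"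
    unfolding N_def by (subst nn_integral_restrict_space) auto
  have part1: "(\<integral>\<^sup>+ x. ennreal (qtimes (q x) (F x)) \<partial>N) \<le> ennreal (g r)"
  proof -
    consider "r = 0" | "r = 1" | "0 < r" "r < 1" using r0 r1 by linarith
    then show ?thesis
    proof cases
      case 1
      have "AE x in N. q x = 0"
        using integral_nonneg_eq_0_iff_AE[OF qint] 1 q_range spN r_eq by auto
      hence "(\<integral>\<^sup>+ x. ennreal (qtimes (q x) (F x)) \<partial>N) = (\<integral>\<^sup>+ x. 0 \<partial>N)"
        by (intro nn_integral_cong_AE) (auto simp: qtimes_def)
      thus ?thesis by simp
    next
      case 2
      have i1: "integrable N (\<lambda>x. 1 - q x)" using qint by auto
      have "integral\<^sup>L N (\<lambda>x. 1 - q x) = 0"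
        using qint 2 r_eq by (simp add: Bochner_Integration.integral_diff PN.prob_space)
      hence "AE x in N. 1 - q x = 0"
        using integral_nonneg_eq_0_iff_AE[OF i1] q_range spN by auto
      hence "(\<integral>\<^sup>+ x. ennreal (qtimes (q x) (F x)) \<partial>N) = (\<integral>\<^sup>+ x. 0 \<partial>N)"
      proof (intro nn_integral_cong_AE, eventually_elim)
        fix x assume "1 - q x = 0"
        hence qx: "q x = 1" by simp
        have "{t. 0 \<le> t \<and> 0 \<le> F x t} = {0..}" unfolding F_def deriv_cdf_def by auto
        thus "ennreal (qtimes (q x) (F x)) = 0" using qx by (simp add: qtimes_def quantile_def)
      qed
      thus ?thesis by simp
    next
      case 3
      obtain c where c: "\<forall>y\<in>{0..1}. g y \<le> g r + c * (y - r)"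
        using concave_support01[OF gcv 3] by blast
      have "(\<integral>\<^sup>+ x. ennreal (qtimes (q x) (F x)) \<partial>N) \<le> (\<integral>\<^sup>+ x. ennreal (g r + c * (q x - r)) \<partial>N)"
      proof (rule nn_integral_mono)
        fix x assume "x \<in> space N"
        hence x: "x \<in> {0..1}" and qx: "q x \<in> {0..1}" using spN q_range by auto
        show "ennreal (qtimes (q x) (F x)) \<le> ennreal (g r + c * (q x - r))"
          using K[OF x qx] c qx by (intro ennreal_leI order_trans[OF K[OF x qx]]) auto
      qed
      also have "\<dots> = ennreal (integral\<^sup>L N (\<lambda>x. g r + c * (q x - r)))"
      proof (rule nn_integral_eq_integral)
        show "integrable N (\<lambda>x. g r + c * (q x - r))" using qint by auto
        show "AE x in N. 0 \<le> g r + c * (q x - r)"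
        proof (rule AE_I2)
          fix x assume "x \<in> space N"
          hence qx: "q x \<in> {0..1}" using spN q_range by auto
          show "0 \<le> g r + c * (q x - r)" using order_trans[OF gnn[OF qx] bspec[OF c qx]] .
        qed
      qed
      also have "integral\<^sup>L N (\<lambda>x. g r + c * (q x - r)) = g r"
      proof -
        have e: "(\<lambda>x. g r + c * (q x - r)) = (\<lambda>x. (g r - c * r) + c * q x)"
          by (simp add: fun_eq_iff algebra_simps)
        have "integral\<^sup>L N (\<lambda>x. (g r - c * r) + c * q x) = (g r - c * r) + c * integral\<^sup>L N q"
          using qint by (simp add: PN.prob_space)
        thus ?thesis using e r_eq by simp
      qed
      finally show ?thesis .
    qed
  qed
  have part2: "qtimes r (F 0) = 2 * \<kappa> * qtimes r (\<lambda>t. F 0 (2 * \<kappa> * t))"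
  proof (cases "r = 0")
    case False
    have "quantile (F 0) (1 - r) = (2 * \<kappa>) * quantile (\<lambda>t. F 0 (2 * \<kappa> * t)) (1 - r)"
      using NE[of 0 "1 - r"] False r0 kappa by (intro quantile_scale) auto
    thus ?thesis using False unfolding qtimes_def by simp
  qed (simp add: qtimes_def)
  show ?thesis
    unfolding Let_def using part1 part2 LHS
    by (simp add: F_def g_def r_def)
qed

end
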